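(* Let $m,m'\geq 0$ and $i>0$ be integers. Let $h(t)$ be a rational polynomial of degree at most $m+1$ with $h(t)=t^{m+1}h(1/t)$, and $h'(t)$ a rational polynomial of degree at most $m'+1$ with $h'(t)=t^{m'+1}h'(1/t)$. If $g^{(m,i)}(h(t))\geq 0$ and $g^{(m',i)}(h'(t))\geq 0$ componentwise, then $g^{(m+m'+1,i)}(h(t)h'(t))\geq 0$ componentwise.
   Context: For integers $d\geq 0$ and $i>0$, let $q\geq 0$, $1\leq r\leq i$ be the unique integers with $d+1=qi+r$ and define $P_{d,i}(t)=(1+t+\cdots+t^i)^q(1+t+\cdots+t^r)$; also set $P_{-1,i}(t)=1$. Let $B_{d,i}$ be the ordered list $\big(P_{d,i}(t),\ tP_{d-2,i}(t),\ldots,\ t^{\lfloor (d+1)/2\rfloor}P_{d-2\lfloor (d+1)/2\rfloor,i}(t)\big)$, a basis of the $\mathbb{Q}$-vector space of polynomials of degree at most $d+1$ satisfying $h(t)=t^{d+1}h(1/t)$. For such $h$, $g^{(d,i)}(h(t))=(g_0,\ldots,g_{\lfloor (d+1)/2\rfloor})$ is the vector of coefficients with $h(t)=\sum_j g_j t^jP_{d-2j,i}(t)$. *)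

theory Defs
  imports "HOL-Computational_Algebra.Polynomial"
begin

definition geom_poly :: "nat \<Rightarrow> rat poly" where
  "geom_poly n = (\<Sum>k\<le>n. monom 1 k)"

(* P_{d,i}(t) for integer d \<ge> -1 and i > 0: d+1 = q i + r with 1 \<le> r \<le> i;
   P_{-1,i} = 1 *)
definition P_poly :: "int \<Rightarrow> nat \<Rightarrow> rat poly" where
  "P_poly d i = (if d < 0 then 1 else
     (let q = (nat (d + 1) - 1) div i; r = nat (d + 1) - q * i
      in geom_poly i ^ q * geom_poly r))"

definition palindromic :: "nat \<Rightarrow> rat poly \<Rightarrow> bool" where
  "palindromic d h \<longleftrightarrow> (\<forall>t::rat. t \<noteq> 0 \<longrightarrow> poly h t = t ^ (d + 1) * poly h (1 / t))"

definition B_expansion :: "nat \<Rightarrow> nat \<Rightarrow> (nat \<Rightarrow> rat) \<Rightarrow> rat poly" where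
  "B_expansion d i g = (\<Sum>j\<le>(d + 1) div 2. smult (g j) (monom 1 j * P_poly (int d - 2 * int j) i))"

definition g_vec :: "nat \<Rightarrow> nat \<Rightarrow> rat poly \<Rightarrow> nat \<Rightarrow> rat" where
  "g_vec d i h = (THE g. (\<forall>j > (d + 1) div 2. g j = 0) \<and> B_expansion d i g = h)"

end

theory Submission
  imports Defs
begin

lemma poly_ext_but_one:
  fixes p q :: "rat poly"
  assumes "\<And>x. x \<noteq> a \<Longrightarrow> poly p x = poly q x"
  shows "p = q"
proof -
  have "\<forall>x. poly ((p - q) * [:-a, 1:]) x = 0"
  proof
    fix x show "poly ((p - q) * [:-a, 1:]) x = 0"
      using assms[of x] by (cases "x = a") auto
  qed
  hence "(p - q) * [:-a, 1:] = 0" using poly_all_0_iff_0 by blast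
  moreover have "[:-a, 1:] \<noteq> 0" by simp
  ultimately show ?thesis by (metis mult_eq_0_iff right_minus_eq)
qed

lemma poly_geom: "poly (geom_poly n) x = (\<Sum>k\<le>n. x ^ k)"
  by (simp add: geom_poly_def poly_sum poly_monom)

lemma poly_geom_mult: "(x - 1) * poly (geom_poly n) (x::rat) = x ^ Suc n - 1"
  by (induction n) (auto simp: poly_geom algebra_simps)

lemma geom_0[simp]: "geom_poly 0 = 1"
  by (simp add: geom_poly_def)

lemma geom_rec2:
  "geom_poly (Suc r) * geom_poly (Suc s) = geom_poly (r + s + 2) + monom 1 1 * geom_poly r * geom_poly s"
proof (rule poly_ext_but_one[where a=1])
  fix x :: rat assume x: "x \<noteq> 1"
  let ?u = "\<lambda>n. poly (geom_poly n) x"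
  have e: "(x - 1) * ?u n = x ^ Suc n - 1" for n by (rule poly_geom_mult)
  have "(x-1)*(x-1)*(?u (Suc r) * ?u (Suc s)) = ((x - 1) * ?u (Suc r)) * ((x - 1) * ?u (Suc s))"
    by (simp add: algebra_simps)
  also have "\<dots> = (x-1) * ((x-1) * ?u (r+s+2)) + x * ((x-1) * ?u r) * ((x-1) * ?u s)"
    unfolding e by (simp add: algebra_simps power_add)
  also have "\<dots> = (x-1)*(x-1)*(?u (r+s+2) + x * ?u r * ?u s)"
    by (simp add: algebra_simps)
  finally have "?u (Suc r) * ?u (Suc s) = ?u (r+s+2) + x * ?u r * ?u s"
    using x by simp
  thus "poly (geom_poly (Suc r) * geom_poly (Suc s)) x =
        poly (geom_poly (r + s + 2) + monom 1 1 * geom_poly r * geom_poly s) x"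
    by (simp add: poly_monom)
qed

lemma CG:
  "r \<le> s \<Longrightarrow> geom_poly r * geom_poly s = (\<Sum>l\<le>r. monom 1 l * geom_poly (r + s - 2*l))"
proof (induction r arbitrary: s)
  case 0 thus ?case by simp
next
  case (Suc r)
  then obtain s' where s: "s = Suc s'" "r \<le> s'" by (cases s) auto
  have "geom_poly (Suc r) * geom_poly s = geom_poly (r + s' + 2) + monom 1 1 * (geom_poly r * geom_poly s')"
    using s geom_rec2 by (simp add: mult.assoc)
  also have "\<dots> = geom_poly (r + s' + 2) + (\<Sum>l\<le>r. monom 1 (Suc l) * geom_poly (r + s' - 2*l))"
    using Suc.IH[OF s(2)] by (simp add: sum_distrib_left mult_monom mult.assoc[symmetric])
  also have "\<dots> = (\<Sum>l\<le>Suc r. monom 1 l * geom_poly (Suc r + s - 2*l))"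
    unfolding sum.atMost_Suc_shift using s
    by (auto intro!: sum.cong simp: numeral_2_eq_2)
  finally show ?case .
qed



definition FF :: "nat \<Rightarrow> nat \<Rightarrow> rat poly" where
  "FF i n = geom_poly i ^ (n div i) * geom_poly (n mod i)"

lemma divmod_eq: "w < (i::nat) \<Longrightarrow> (Q*i + w) div i = Q \<and> (Q*i+w) mod i = w"
  by simp

lemma FF_eq: "w < i \<Longrightarrow> FF i (Q*i + w) = geom_poly i ^ Q * geom_poly w"
  unfolding FF_def using divmod_eq by simp

lemma P_aux:
  assumes n: "n = Q*i + w" and w: "0 < w" "w \<le> i"
  shows "P_poly (int n - 1) i = geom_poly i ^ Q * geom_poly w"
proof -
  have n0: "n \<noteq> 0" using n w by simp
  have P: "P_poly (int n - 1) i = geom_poly i ^ ((n - Suc 0) div i) * geom_poly (n - (n - Suc 0) div i * i)"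
    using n0 by (simp add: P_poly_def Let_def)
  have "n - Suc 0 = Q*i + (w - 1)" using n w by linarith
  moreover have "w - 1 < i" using w by linarith
  hence "(Q*i + (w-1)) div i = Q" using divmod_eq by blast
  ultimately have d: "(n - Suc 0) div i = Q" by simp
  have r: "n - Q * i = w" using n by linarith
  show ?thesis unfolding P d r ..
qed

lemma P_FF:
  assumes "0 < i" shows "P_poly (int n - 1) i = FF i n"
proof (cases "n = 0")
  case True thus ?thesis by (simp add: P_poly_def FF_def)
next
  case False
  show ?thesis
  proof (cases "n mod i = 0")
    case True
    with False obtain Q' where Q: "n div i = Suc Q'" by (cases "n div i") auto
    have n: "n = Q'*i + i" using Q True by (metis add.commute div_mult_mod_eq mult_Suc add_0_right)
    have "P_poly (int n - 1) i = geom_poly i ^ Q' * geom_poly i"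
      using P_aux[OF n assms] by simp
    also have "\<dots> = FF i n" unfolding FF_def Q True by simp
    finally show ?thesis .
  next
    case False
    have n: "n = (n div i)*i + n mod i" by simp
    have "n mod i \<le> i" using assms by (simp add: order_less_imp_le)
    thus ?thesis using P_aux[OF n] False unfolding FF_def by simp
  qed
qed


definition palP :: "nat \<Rightarrow> rat poly \<Rightarrow> bool" where
  "palP n p \<longleftrightarrow> (\<forall>x::rat. x \<noteq> 0 \<longrightarrow> poly p x = x ^ n * poly p (1 / x))"

lemma palP_mult: assumes "palP a p" "palP b q" shows "palP (a + b) (p * q)"
  unfolding palP_def
proof (intro allI impI)
  fix x :: rat assume x: "x \<noteq> 0"
  have "poly p x = x ^ a * poly p (1/x)" "poly q x = x ^ b * poly q (1/x)"
    using assms x unfolding palP_def by blast+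
  thus "poly (p * q) x = x ^ (a + b) * poly (p * q) (1 / x)"
    by (simp add: power_add)
qed

lemma palP_one: "palP 0 1" by (simp add: palP_def)

lemma palP_power: "palP a p \<Longrightarrow> palP (k * a) (p ^ k)"
  by (induction k) (simp_all add: palP_one palP_mult)

lemma palP_geom: "palP n (geom_poly n)"
  unfolding palP_def
proof (intro allI impI)
  fix x :: rat assume x: "x \<noteq> 0"
  have "(\<Sum>k\<le>n. x ^ k) = (\<Sum>k\<le>n. x ^ (n - k))"
    using sum.atLeastAtMost_rev[of "\<lambda>k. x ^ k" 0 n] by (simp add: atLeast0AtMost)
  also have "\<dots> = (\<Sum>k\<le>n. x ^ n * (1/x) ^ k)"
    by (rule sum.cong) (auto simp: power_diff x power_one_over)
  finally show "poly (geom_poly n) x = x ^ n * poly (geom_poly n) (1 / x)"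
    by (simp add: poly_geom sum_distrib_left)
qed

lemma palP_FF: "palP n (FF i n)"
proof -
  have "palP ((n div i) * i + n mod i) (FF i n)"
    unfolding FF_def by (intro palP_mult palP_power palP_geom)
  thus ?thesis by simp
qed

lemma coeff_geom: "coeff (geom_poly n) k = (if k \<le> n then 1 else 0)"
  by (simp add: geom_poly_def coeff_sum coeff_monom)

lemma degree_geom: "degree (geom_poly n) \<le> n"
  by (rule degree_le) (simp add: coeff_geom)

lemma degree_FF: "degree (FF i n) \<le> n"
proof -
  have "degree (FF i n) \<le> (n div i) * i + n mod i"
    unfolding FF_def
    by (rule order.trans[OF degree_mult_le], rule add_mono,
        rule order.trans[OF degree_power_le], simp add: degree_geom, rule degree_geom)
  thus ?thesis by simp
qed

lemma coeff0_FF: "coeff (FF i n) 0 = 1"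
  by (simp add: FF_def coeff_mult_0 coeff_geom coeff_0_power)



lemma poly_n: fixes p :: "rat poly" assumes "degree p \<le> n" shows "poly p x = (\<Sum>k\<le>n. coeff p k * x ^ k)"
proof -
  have "poly p x = (\<Sum>k\<le>degree p. coeff p k * x ^ k)" by (rule poly_altdef)
  also have "\<dots> = (\<Sum>k\<le>n. coeff p k * x ^ k)"
    by (rule sum.mono_neutral_left) (use assms in \<open>auto simp: coeff_eq_0\<close>)
  finally show ?thesis .
qed

lemma palP_coeff:
  assumes "degree p \<le> n" "palP n p" "k \<le> n"
  shows "coeff p k = coeff p (n - k)"
proof -
  define R where "R = (\<Sum>k\<le>n. monom (coeff p (n - k)) k)"
  have "p = R"
  proof (rule poly_ext_but_one[where a=0])
    fix x :: rat assume x: "x \<noteq> 0"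
    have "poly p x = x ^ n * poly p (1/x)"
      using assms(2) x unfolding palP_def by blast
    also have "\<dots> = x ^ n * (\<Sum>k\<le>n. coeff p k * (1/x) ^ k)"
      using poly_n[OF assms(1)] by simp
    also have "\<dots> = (\<Sum>k\<le>n. coeff p k * x ^ (n - k))"
      by (simp add: sum_distrib_left, rule sum.cong) (auto simp: power_diff x power_one_over)
    also have "\<dots> = (\<Sum>k\<le>n. coeff p (n - k) * x ^ (n - (n - k)))"
      using sum.atLeastAtMost_rev[of "\<lambda>k. coeff p k * x ^ (n - k)" 0 n] by (simp add: atLeast0AtMost)
    also have "\<dots> = poly R x"
      unfolding R_def poly_sum poly_monom by (rule sum.cong) auto
    finally show "poly p x = poly R x" .
  qed
  have "coeff R k = coeff p (n - k)"
    unfolding R_def coeff_sum coeff_monom using assms(3) by (simp add: if_distrib)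
  thus ?thesis using \<open>p = R\<close> by metis
qed


definition EE :: "nat \<Rightarrow> nat \<Rightarrow> (nat \<Rightarrow> rat) \<Rightarrow> rat poly" where
  "EE i n g = (\<Sum>j\<le>n div 2. smult (g j) (monom 1 j * FF i (n - 2*j)))"

lemma smult_sum_right: "smult c (sum f A) = (\<Sum>x\<in>A. smult c (f x))"
  by (induction A rule: infinite_finite_induct) (simp_all add: smult_add_right)

lemma EE_small: "n < 2 \<Longrightarrow> EE i n g = smult (g 0) (FF i n)"
  by (simp add: EE_def)

lemma EE_rec: "EE i (Suc (Suc n)) g = smult (g 0) (FF i (Suc (Suc n))) + monom 1 1 * EE i n (\<lambda>j. g (Suc j))"
proof -
  have "Suc (Suc n) div 2 = Suc (n div 2)" by simp
  hence "EE i (Suc (Suc n)) g = smult (g 0) (FF i (Suc (Suc n))) +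
     (\<Sum>j\<le>n div 2. smult (g (Suc j)) (monom 1 (Suc j) * FF i (Suc (Suc n) - 2 * Suc j)))"
    unfolding EE_def by (simp only: sum.atMost_Suc_shift) simp
  also have "(\<Sum>j\<le>n div 2. smult (g (Suc j)) (monom 1 (Suc j) * FF i (Suc (Suc n) - 2 * Suc j)))
     = monom 1 1 * EE i n (\<lambda>j. g (Suc j))"
    unfolding EE_def sum_distrib_left
    by (rule sum.cong) (simp_all add: mult_monom mult.assoc[symmetric])
  finally show ?thesis .
qed

lemma EE_diff: "EE i n g - EE i n g' = EE i n (\<lambda>j. g j - g' j)"
  unfolding EE_def by (simp add: sum_subtractf smult_diff_left)

lemma EE_add: "EE i n g + EE i n g' = EE i n (\<lambda>j. g j + g' j)"
  unfolding EE_def by (simp add: sum.distrib smult_add_left)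

lemma EE_smult: "smult c (EE i n g) = EE i n (\<lambda>j. c * g j)"
  unfolding EE_def by (simp add: smult_sum_right)

lemma EE_cong: "(\<And>j. j \<le> n div 2 \<Longrightarrow> g j = g' j) \<Longrightarrow> EE i n g = EE i n g'"
  unfolding EE_def by (rule sum.cong) auto

lemma X_mult: "monom (1::rat) 1 * q = pCons 0 q"
  by (simp add: poly_eq_iff coeff_monom_mult coeff_pCons split: nat.split)

lemma EE_zero: "EE i n g = 0 \<Longrightarrow> \<forall>j\<le>n div 2. g j = 0"
proof (induction n arbitrary: g rule: less_induct)
  case (less n)
  show ?case
  proof (cases "n < 2")
    case True
    hence "smult (g 0) (FF i n) = 0" using less.prems EE_small by simp
    hence "g 0 = 0" using coeff0_FF[of i n] by (metis coeff_smult coeff_0 mult_1_right)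
    show ?thesis
    proof (intro allI impI)
      fix j assume "j \<le> n div 2"
      hence "j = 0" using True by linarith
      thus "g j = 0" using \<open>g 0 = 0\<close> by simp
    qed
  next
    case False
    define n' where "n' = n - 2"
    have n: "n = Suc (Suc n')" using False by (simp add: n'_def)
    have e: "smult (g 0) (FF i n) + pCons 0 (EE i n' (\<lambda>j. g (Suc j))) = 0"
      using less.prems EE_rec[of i n' g] n X_mult by simp
    hence "coeff (smult (g 0) (FF i n) + pCons 0 (EE i n' (\<lambda>j. g (Suc j)))) 0 = 0" by simp
    hence g0: "g 0 = 0" using coeff0_FF[of i n] by simp
    hence "EE i n' (\<lambda>j. g (Suc j)) = 0" using e by simp
    hence IH: "\<forall>j\<le>n' div 2. g (Suc j) = 0" using less.IH[of n'] n by simp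
    show ?thesis
    proof (intro allI impI)
      fix j assume "j \<le> n div 2"
      thus "g j = 0" using g0 IH n by (cases j) auto
    qed
  qed
qed

lemma FF_sym: "k \<le> n \<Longrightarrow> coeff (FF i n) k = coeff (FF i n) (n - k)"
  by (rule palP_coeff[OF degree_FF palP_FF])

lemma EE_exists:
  "degree h \<le> n \<Longrightarrow> (\<forall>k\<le>n. coeff h k = coeff h (n - k)) \<Longrightarrow> \<exists>g. h = EE i n g"
proof (induction n arbitrary: h rule: less_induct)
  case (less n)
  define c where "c = coeff h 0"
  define h1 where "h1 = h - smult c (FF i n)"
  have "degree (smult c (FF i n)) \<le> n"
    using degree_smult_le[of c "FF i n"] degree_FF[of i n] by linarith
  hence deg1: "degree h1 \<le> n" unfolding h1_def
    by (intro degree_diff_le less.prems(1))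
  have sym1: "coeff h1 k = coeff h1 (n - k)" if "k \<le> n" for k
    using less.prems(2)[rule_format, OF that] FF_sym[OF that, of i] by (simp add: h1_def)
  have c0: "coeff h1 0 = 0" by (simp add: h1_def c_def coeff0_FF)
  have cn: "coeff h1 n = 0" using sym1[of 0] c0 by simp
  show ?case
  proof (cases "n < 2")
    case True
    have "h1 = 0"
    proof (rule poly_eqI)
      fix k show "coeff h1 k = coeff 0 k"
      proof (cases "k \<le> n")
        case True
        hence "k = 0 \<or> k = n" using \<open>n < 2\<close> by linarith
        thus ?thesis using c0 cn by auto
      next
        case False thus ?thesis using deg1 by (simp add: coeff_eq_0)
      qed
    qed
    hence "h = EE i n (\<lambda>_. c)" using EE_small[OF True] by (simp add: h1_def)
    thus ?thesis by blast
  next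
    case False
    define n' where "n' = n - 2"
    have n: "n = Suc (Suc n')" using False by (simp add: n'_def)
    obtain a q where aq: "h1 = pCons a q" by (cases h1) auto
    have "a = 0" using c0 aq by simp
    have cq: "coeff q k = coeff h1 (Suc k)" for k using aq by simp
    have degq: "degree q \<le> n'"
    proof (rule degree_le, intro allI impI)
      fix k assume "n' < k"
      show "coeff q k = 0"
      proof (cases "Suc k = n")
        case True thus ?thesis using cq cn by simp
      next
        case False
        hence "n < Suc k" using \<open>n' < k\<close> n by simp
        thus ?thesis using cq deg1 by (simp add: coeff_eq_0)
      qed
    qed
    have symq: "\<forall>k\<le>n'. coeff q k = coeff q (n' - k)"
    proof (intro allI impI)
      fix k assume k: "k \<le> n'"
      have "coeff q k = coeff h1 (n - Suc k)" using cq sym1[of "Suc k"] k n by simp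
      also have "n - Suc k = Suc (n' - k)" using k n by simp
      finally show "coeff q k = coeff q (n' - k)" using cq by simp
    qed
    have "n' < n" using n by simp
    then obtain g' where g': "q = EE i n' g'" using less.IH[OF _ degq symq] by blast
    define g where "g = (\<lambda>j. if j = 0 then c else g' (j - 1))"
    have "h = smult c (FF i n) + pCons 0 q" using aq \<open>a = 0\<close> by (simp add: h1_def)
    also have "\<dots> = EE i n g"
      unfolding n EE_rec X_mult g' by (simp add: g_def)
    finally show ?thesis by blast
  qed
qed




definition cone :: "nat \<Rightarrow> nat \<Rightarrow> rat poly set" where
  "cone i n = {p. \<exists>g. (\<forall>j. 0 \<le> g j) \<and> p = EE i n g}"

lemma cone_0: "0 \<in> cone i n"
proof -
  have "EE i n (\<lambda>_. 0) = 0" by (simp add: EE_def)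
  thus ?thesis unfolding cone_def mem_Collect_eq by (intro exI[of _ "\<lambda>_. 0"]) simp
qed

lemma cone_add: "p \<in> cone i n \<Longrightarrow> q \<in> cone i n \<Longrightarrow> p + q \<in> cone i n"
  unfolding cone_def
proof clarify
  fix g g' :: "nat \<Rightarrow> rat" assume "\<forall>j. 0 \<le> g j" "\<forall>j. 0 \<le> g' j"
  hence "\<forall>j. 0 \<le> g j + g' j" by (simp add: add_nonneg_nonneg)
  thus "\<exists>g''. (\<forall>j. 0 \<le> g'' j) \<and> EE i n g + EE i n g' = EE i n g''"
    by (intro exI[of _ "\<lambda>j. g j + g' j"]) (simp add: EE_add)
qed

lemma cone_smult: "0 \<le> c \<Longrightarrow> p \<in> cone i n \<Longrightarrow> smult c p \<in> cone i n"
  unfolding cone_def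
proof clarify
  fix g :: "nat \<Rightarrow> rat" assume "0 \<le> c" "\<forall>j. 0 \<le> g j"
  hence "\<forall>j. 0 \<le> c * g j" by simp
  thus "\<exists>g''. (\<forall>j. 0 \<le> g'' j) \<and> smult c (EE i n g) = EE i n g''"
    by (intro exI[of _ "\<lambda>j. c * g j"]) (simp add: EE_smult)
qed

lemma cone_sum: "(\<And>x. x \<in> A \<Longrightarrow> f x \<in> cone i n) \<Longrightarrow> sum f A \<in> cone i n"
proof (induction A rule: infinite_finite_induct)
  case (infinite A) thus ?case by (simp add: cone_0)
next
  case empty thus ?case by (simp add: cone_0)
next
  case (insert x F) thus ?case by (simp add: cone_add)
qed

lemma cone_basis:
  assumes "2 * l \<le> n" shows "monom 1 l * FF i (n - 2 * l) \<in> cone i n"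
proof -
  define g where "g = (\<lambda>j. if j = l then (1::rat) else 0)"
  have l: "l \<le> n div 2" using assms by linarith
  have "EE i n g = (\<Sum>j\<le>n div 2. if j = l then monom 1 j * FF i (n - 2 * j) else 0)"
    unfolding EE_def g_def by (rule sum.cong) auto
  also have "\<dots> = monom 1 l * FF i (n - 2 * l)" using l by (simp add: sum.delta)
  finally have "monom 1 l * FF i (n - 2 * l) = EE i n g" ..
  moreover have "\<forall>j. 0 \<le> g j" by (simp add: g_def)
  ultimately show ?thesis unfolding cone_def by blast
qed

lemma cone_shift:
  assumes "p \<in> cone i n" shows "monom 1 s * p \<in> cone i (n + 2 * s)"
proof -
  obtain g where g: "\<forall>j. 0 \<le> g j" "p = EE i n g" using assms unfolding cone_def by blast
  have "monom 1 s * p = (\<Sum>j\<le>n div 2. smult (g j) (monom 1 (s + j) * FF i (n + 2 * s - 2 * (s + j))))"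
    unfolding g EE_def sum_distrib_left
    by (rule sum.cong) (simp_all add: mult_monom mult.assoc[symmetric])
  also have "\<dots> \<in> cone i (n + 2 * s)"
  proof (rule cone_sum)
    fix j assume "j \<in> {..n div 2}"
    hence "2 * (s + j) \<le> n + 2 * s" by auto
    thus "smult (g j) (monom 1 (s + j) * FF i (n + 2 * s - 2 * (s + j))) \<in> cone i (n + 2 * s)"
      using g(1) by (intro cone_smult cone_basis) auto
  qed
  finally show ?thesis .
qed




lemma CG': "geom_poly r * geom_poly s = (\<Sum>l\<le>min r s. monom 1 l * geom_poly (r + s - 2*l))"
proof (cases "r \<le> s")
  case True thus ?thesis using CG[OF True] by (simp add: min_def)
next
  case False
  hence "s \<le> r" by simp
  from CG[OF this] show ?thesis using False by (simp add: min_def mult.commute add.commute)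
qed

lemma sum_split_at: "u \<le> (m::nat) \<Longrightarrow> sum f {..m} = sum f {..u} + sum f {u<..m}"
proof -
  assume "u \<le> m"
  hence "{..m} = {..u} \<union> {u<..m}" by auto
  moreover have "sum f ({..u} \<union> {u<..m}) = sum f {..u} + sum f {u<..m}"
    by (rule sum.union_disjoint) auto
  ultimately show ?thesis by simp
qed

lemma FF_prod:
  assumes i: "0 < i" shows "FF i a * FF i b \<in> cone i (a + b)"
proof -
  define Q r s where "Q = a div i + b div i" and "r = a mod i" and "s = b mod i"
  have r: "r < i" and s: "s < i" using i by (simp_all add: r_def s_def)
  have ab: "a + b = Q*i + (r + s)"
    unfolding Q_def r_def s_def using div_mult_mod_eq[of a i] div_mult_mod_eq[of b i]
    by (simp add: algebra_simps)
  have prod: "FF i a * FF i b = geom_poly i ^ Q * (geom_poly r * geom_poly s)"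
    by (simp add: FF_def Q_def r_def s_def power_add mult_ac)
  have trm: "geom_poly i ^ Q * (monom 1 l * geom_poly (r + s - 2*l)) = monom 1 l * FF i (a + b - 2*l)"
    if "2*l \<le> r + s" "r + s - 2*l < i" for l
  proof -
    have "a + b - 2*l = Q*i + (r + s - 2*l)" using ab that by simp
    thus ?thesis using FF_eq[OF that(2), of Q] by (simp add: mult_ac)
  qed
  show ?thesis
  proof (cases "r + s < i")
    case True
    have "FF i a * FF i b = (\<Sum>l\<le>min r s. monom 1 l * FF i (a + b - 2*l))"
      unfolding prod CG' sum_distrib_left
      by (rule sum.cong, simp, rule trm) (use True in auto)
    also have "\<dots> \<in> cone i (a + b)"
      by (rule cone_sum, rule cone_basis) (use ab in auto)
    finally show ?thesis .
  next
    case False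
    define u where "u = r + s - i"
    have u: "u < i" "u \<le> min r s" "u + i = r + s" using False r s unfolding u_def by linarith+
    have "geom_poly r * geom_poly s = geom_poly u * geom_poly i +
             (\<Sum>l\<in>{u<..min r s}. monom 1 l * geom_poly (r + s - 2*l))"
      unfolding CG'[of r s] sum_split_at[OF u(2)] CG'[of u i] u(3) using u(1) by (simp add: min_def)
    hence "FF i a * FF i b = geom_poly i ^ Suc Q * geom_poly u +
             (\<Sum>l\<in>{u<..min r s}. geom_poly i ^ Q * (monom 1 l * geom_poly (r + s - 2*l)))"
      unfolding prod by (simp add: sum_distrib_left algebra_simps)
    also have "\<dots> = FF i (a + b) + (\<Sum>l\<in>{u<..min r s}. monom 1 l * FF i (a + b - 2*l))"
    proof -
      have "a + b = Suc Q * i + u" using ab u by simp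
      hence "FF i (a + b) = geom_poly i ^ Suc Q * geom_poly u" using FF_eq[OF u(1), of "Suc Q"] by simp
      moreover have "(\<Sum>l\<in>{u<..min r s}. geom_poly i ^ Q * (monom 1 l * geom_poly (r + s - 2*l)))
          = (\<Sum>l\<in>{u<..min r s}. monom 1 l * FF i (a + b - 2*l))"
        by (rule sum.cong, simp, rule trm) (use u r s in \<open>auto simp: u_def\<close>)
      ultimately show ?thesis by simp
    qed
    also have "\<dots> \<in> cone i (a + b)"
    proof (rule cone_add)
      show "FF i (a + b) \<in> cone i (a + b)" using cone_basis[of 0 "a+b" i] by simp
      show "(\<Sum>l\<in>{u<..min r s}. monom 1 l * FF i (a + b - 2*l)) \<in> cone i (a + b)"
        by (rule cone_sum, rule cone_basis) (use ab in auto)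
    qed
    finally show ?thesis .
  qed
qed

lemma cone_mult:
  assumes i: "0 < i" and p: "p \<in> cone i n" and q: "q \<in> cone i n'"
  shows "p * q \<in> cone i (n + n')"
proof -
  have mm: "monom (1::rat) (x + y) = monom 1 x * monom 1 y" for x y by (simp add: mult_monom)
  obtain g where g: "\<forall>j. 0 \<le> g j" "p = EE i n g" using p unfolding cone_def by blast
  obtain g' where g': "\<forall>j. 0 \<le> g' j" "q = EE i n' g'" using q unfolding cone_def by blast
  have "p * q = (\<Sum>j\<le>n div 2. \<Sum>k\<le>n' div 2.
      smult (g j * g' k) (monom 1 (j + k) * (FF i (n - 2*j) * FF i (n' - 2*k))))"
    unfolding g(2) g'(2) EE_def sum_product
    by (intro sum.cong refl) (simp add: mm mult_ac)
  also have "\<dots> \<in> cone i (n + n')"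
  proof (intro cone_sum)
    fix j k assume j: "j \<in> {..n div 2}" and k: "k \<in> {..n' div 2}"
    have e: "n - 2*j + (n' - 2*k) + 2 * (j + k) = n + n'" using j k by auto
    have "monom 1 (j + k) * (FF i (n - 2*j) * FF i (n' - 2*k)) \<in> cone i (n + n')"
      using cone_shift[OF FF_prod[OF i, of "n - 2*j" "n' - 2*k"], where s="j + k"] e by simp
    thus "smult (g j * g' k) (monom 1 (j + k) * (FF i (n - 2*j) * FF i (n' - 2*k))) \<in> cone i (n + n')"
      using g(1) g'(1) by (intro cone_smult) simp_all
  qed
  finally show ?thesis .
qed

lemma B_EE:
  assumes i: "0 < i" shows "B_expansion d i g = EE i (Suc d) g"
  unfolding B_expansion_def EE_def
proof (rule sum.cong)
  show "{..(d + 1) div 2} = {..Suc d div 2}" by simp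
next
  fix j assume "j \<in> {..Suc d div 2}"
  hence "2 * j \<le> Suc d" by auto
  hence "int (Suc d - 2 * j) = int (Suc d) - int (2 * j)" by (rule of_nat_diff)
  hence eq: "int d - 2 * int j = int (Suc d - 2 * j) - 1" by simp
  have "P_poly (int d - 2 * int j) i = FF i (Suc d - 2 * j)"
    unfolding eq by (rule P_FF[OF i])
  thus "smult (g j) (monom 1 j * P_poly (int d - 2 * int j) i) =
        smult (g j) (monom 1 j * FF i (Suc d - 2 * j))" by (simp only:)
qed

lemma g_vec_eq:
  assumes i: "0 < i" and h: "h = EE i (Suc d) g" and j: "j \<le> Suc d div 2"
  shows "g_vec d i h j = g j"
proof -
  define gt where "gt = (\<lambda>j. if j \<le> (d + 1) div 2 then g j else 0)"
  have P: "(\<forall>j > (d + 1) div 2. gt j = 0) \<and> B_expansion d i gt = h"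
    unfolding B_EE[OF i] h by (auto simp: gt_def intro!: EE_cong)
  have "g_vec d i h = gt"
    unfolding g_vec_def
  proof (rule the_equality[where P="\<lambda>g. (\<forall>j > (d + 1) div 2. g j = 0) \<and> B_expansion d i g = h", OF P])
    fix g2 assume g2: "(\<forall>j > (d + 1) div 2. g2 j = 0) \<and> B_expansion d i g2 = h"
    have "EE i (Suc d) (\<lambda>j. g2 j - gt j) = 0"
      using g2 P unfolding B_EE[OF i] EE_diff[symmetric] by simp
    hence z: "\<forall>j\<le>Suc d div 2. g2 j - gt j = 0" by (rule EE_zero)
    show "g2 = gt"
    proof
      fix j show "g2 j = gt j"
        using z g2 P by (cases "j \<le> Suc d div 2") auto
    qed
  qed
  thus ?thesis using j by (simp add: gt_def)
qed

lemma in_cone: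
  assumes i: "0 < i" and deg: "degree h \<le> m + 1" and pal: "palindromic m h"
    and nn: "\<forall>j \<le> (m + 1) div 2. g_vec m i h j \<ge> 0"
  shows "h \<in> cone i (Suc m)"
proof -
  have "palP (Suc m) h" using pal unfolding palindromic_def palP_def Suc_eq_plus1 .
  moreover have deg': "degree h \<le> Suc m" using deg by simp
  ultimately have "\<forall>k\<le>Suc m. coeff h k = coeff h (Suc m - k)"
    using palP_coeff by blast
  then obtain g where g: "h = EE i (Suc m) g" using EE_exists[OF deg'] by blast
  define G where "G = (\<lambda>j. if j \<le> Suc m div 2 then g j else 0)"
  have "\<forall>j. 0 \<le> G j"
    using nn g_vec_eq[OF i g] by (simp add: G_def)
  moreover have "h = EE i (Suc m) G" unfolding g by (rule EE_cong) (simp add: G_def)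
  ultimately show ?thesis unfolding cone_def by blast
qed

theorem proposition4p1:
  fixes m m' i :: nat and h h' :: "rat poly"
  assumes "i > 0"
    and "degree h \<le> m + 1" and "palindromic m h"
    and "degree h' \<le> m' + 1" and "palindromic m' h'"
    and "\<forall>j \<le> (m + 1) div 2. g_vec m i h j \<ge> 0"
    and "\<forall>j \<le> (m' + 1) div 2. g_vec m' i h' j \<ge> 0"
  shows "\<forall>j \<le> (m + m' + 2) div 2. g_vec (m + m' + 1) i (h * h') j \<ge> 0"
proof -
  have "h * h' \<in> cone i (Suc m + Suc m')"
    using cone_mult[OF assms(1) in_cone[OF assms(1,2,3,6)] in_cone[OF assms(1,4,5,7)]] .
  then obtain G where G: "\<forall>j. 0 \<le> G j" "h * h' = EE i (Suc (m + m' + 1)) G"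
    unfolding cone_def by auto
  show ?thesis
  proof (intro allI impI)
    fix j assume "j \<le> (m + m' + 2) div 2"
    hence "j \<le> Suc (m + m' + 1) div 2" by simp
    thus "0 \<le> g_vec (m + m' + 1) i (h * h') j" using g_vec_eq[OF assms(1) G(2)] G(1) by simp
  qed
qed



end
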